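(* Every $1$-perfect orientation of a connected graph has at most one sink.
   Context: An orientation of a graph $G$ is $1$-perfect if for every vertex $v$ the out-neighborhood of $v$ is a clique in $G$. A sink is a vertex of out-degree $0$. *)

theory Defs
  imports Main
begin

definition simple_graph :: "'a set \<Rightarrow> ('a \<Rightarrow> 'a \<Rightarrow> bool) \<Rightarrow> bool" where
  "simple_graph V E \<longleftrightarrow> finite V \<and>
     (\<forall>u v. E u v \<longrightarrow> u \<in> V \<and> v \<in> V) \<and>
     (\<forall>u v. E u v \<longrightarrow> E v u) \<and> (\<forall>v. \<not> E v v)"

definition connected_graph :: "'a set \<Rightarrow> ('a \<Rightarrow> 'a \<Rightarrow> bool) \<Rightarrow> bool" where
  "connected_graph V E \<longleftrightarrow> (\<forall>u\<in>V. \<forall>v\<in>V. (\<lambda>x y. E x y)\<^sup>*\<^sup>* u v)"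

definition orientation :: "'a set \<Rightarrow> ('a \<Rightarrow> 'a \<Rightarrow> bool) \<Rightarrow> ('a \<Rightarrow> 'a \<Rightarrow> bool) \<Rightarrow> bool" where
  "orientation V E D \<longleftrightarrow> (\<forall>u v. D u v \<longrightarrow> E u v) \<and>
     (\<forall>u v. E u v \<longrightarrow> (D u v \<longleftrightarrow> \<not> D v u))"

definition out_nbhd :: "('a \<Rightarrow> 'a \<Rightarrow> bool) \<Rightarrow> 'a \<Rightarrow> 'a set" where
  "out_nbhd D v = {w. D v w}"

definition is_clique :: "('a \<Rightarrow> 'a \<Rightarrow> bool) \<Rightarrow> 'a set \<Rightarrow> bool" where
  "is_clique E S \<longleftrightarrow> (\<forall>u\<in>S. \<forall>w\<in>S. u \<noteq> w \<longrightarrow> E u w)"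

definition one_perfect :: "'a set \<Rightarrow> ('a \<Rightarrow> 'a \<Rightarrow> bool) \<Rightarrow> ('a \<Rightarrow> 'a \<Rightarrow> bool) \<Rightarrow> bool" where
  "one_perfect V E D \<longleftrightarrow> orientation V E D \<and> (\<forall>v\<in>V. is_clique E (out_nbhd D v))"

definition is_sink :: "'a set \<Rightarrow> ('a \<Rightarrow> 'a \<Rightarrow> bool) \<Rightarrow> 'a \<Rightarrow> bool" where
  "is_sink V D v \<longleftrightarrow> v \<in> V \<and> out_nbhd D v = {}"

end

theory Submission
  imports Defs
begin

lemma key:
  assumes orient: "orientation V E D"
    and cl: "\<forall>v\<in>V. is_clique E (out_nbhd D v)"
    and sg: "simple_graph V E"
    and tsink: "is_sink V D t"
  shows "\<And>y0 y1. D y1 y0 \<Longrightarrow> (E ^^ m) y1 t \<Longrightarrow> (\<forall>j\<le>m. \<not> (E ^^ j) y0 t) \<Longrightarrow> False"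
proof (induction m)
  case 0
  then show ?case using tsink by (auto simp: is_sink_def out_nbhd_def)
next
  case (Suc k)
  from Suc.prems(2) obtain y2 where e12: "E y1 y2" and w: "(E ^^ k) y2 t"
    by (rule relpowp_Suc_E2)
  have y1V: "y1 \<in> V" using e12 sg unfolding simple_graph_def by blast
  show ?case
  proof (cases "D y2 y1")
    case True
    have "\<forall>j\<le>k. \<not> (E ^^ j) y1 t"
    proof (intro allI impI notI)
      fix j assume "j \<le> k" "(E ^^ j) y1 t"
      moreover have "E y1 y0" using Suc.prems(1) orient
        unfolding orientation_def by blast
      then have "E y0 y1" using sg unfolding simple_graph_def by blast
      ultimately have "(E ^^ Suc j) y0 t" by (blast intro: relpowp_Suc_I2)
      moreover have "Suc j \<le> Suc k" using \<open>j \<le> k\<close> by simp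
      ultimately show False using Suc.prems(3) by blast
    qed
    then show False using Suc.IH[OF True w] by blast
  next
    case False
    then have "D y1 y2" using orient e12 unfolding orientation_def by blast
    then have "y2 \<in> out_nbhd D y1" "y0 \<in> out_nbhd D y1" using Suc.prems(1)
      by (auto simp: out_nbhd_def)
    then have "y0 = y2 \<or> E y0 y2" using cl y1V by (auto simp: is_clique_def)
    then show False
    proof
      assume "y0 = y2" then show False using w Suc.prems(3) by auto
    next
      assume "E y0 y2"
      then have "(E ^^ Suc k) y0 t" using w by (rule relpowp_Suc_I2)
      then show False using Suc.prems(3) by blast
    qed
  qed
qed

theorem lemma2p9:
  assumes "simple_graph V E"
    and "connected_graph V E"
    and "one_perfect V E D"
  shows "card {v. is_sink V D v} \<le> 1"
proof -
  have orient: "orientation V E D" and cl: "\<forall>v\<in>V. is_clique E (out_nbhd D v)"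
    using assms(3) by (auto simp: one_perfect_def)
  have fin: "finite {v. is_sink V D v}"
    by (rule finite_subset[of _ V]) (use assms(1) in \<open>auto simp: simple_graph_def is_sink_def\<close>)
  have uniq: "s = t" if s: "is_sink V D s" and t: "is_sink V D t" for s t
  proof (rule ccontr)
    assume ne: "s \<noteq> t"
    have "E\<^sup>*\<^sup>* s t" using assms(2) s t by (auto simp: connected_graph_def is_sink_def)
    then obtain n where "(E ^^ n) s t" unfolding rtranclp_power by blast
    define n0 where "n0 = (LEAST n. (E ^^ n) s t)"
    have w0: "(E ^^ n0) s t" unfolding n0_def by (rule LeastI) fact
    have mn: "\<forall>j<n0. \<not> (E ^^ j) s t" unfolding n0_def using not_less_Least by blast
    have "n0 \<noteq> 0"
    proof
      assume "n0 = 0" then show False using w0 ne by simp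
    qed
    then obtain k where k: "n0 = Suc k" by (cases n0) auto
    from w0 obtain y1 where e: "E s y1" and w: "(E ^^ k) y1 t"
      unfolding k by (rule relpowp_Suc_E2)
    have "\<not> D s y1" using s by (auto simp: is_sink_def out_nbhd_def)
    then have "D y1 s" using orient e unfolding orientation_def by blast
    moreover have "\<forall>j\<le>k. \<not> (E ^^ j) s t" using mn k by auto
    ultimately show False using key[OF orient cl assms(1) t] w by blast
  qed
  have "card {v. is_sink V D v} \<le> Suc 0" using card_le_Suc0_iff_eq[OF fin] uniq by blast
  then show ?thesis by simp
qed

end
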